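(* Let $\phi=(\phi_g,X_g,X)_{g\in G}$ be a partial action of a group $G$ on a set $X$ and let $H$ be a normal subgroup of $G$. Then there is an induced partial action $\overline{\phi}$ of $G/H$ on $X$ (with $X_{gH}=\bigcup_{k\in gH}X_k$ and $\overline{\phi}_{gH}(x)=\phi_k(x)$ for $k\in gH$, $x\in X_{k^{-1}}$) if and only if for every $h\in H$, $X_h=X_{h^{-1}}$ and $\phi_h=\operatorname{id}$.
   Context: A partial action of a group $G$ (identity $\varepsilon$) on a set $X$ is $\phi=(\phi_g,X_g,X)_{g\in G}$ with $X_g\subseteq X$ and bijections $\phi_g:X_{g^{-1}}\to X_g$ such that (i) $X_\varepsilon=X$ and $\phi_\varepsilon=\operatorname{id}_X$; (ii) $\phi_g(X_{g^{-1}}\cap X_h)=X_g\cap X_{gh}$ for all $g,h$; (iii) $\phi_g(\phi_h(x))=\phi_{gh}(x)$ for all $g,h$ and $x\in X_{h^{-1}}\cap X_{h^{-1}g^{-1}}$. *)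

theory Defs
  imports "HOL-Algebra.Algebra"
begin

text \<open>Partial action of a group G on a set X: domains D g (= X_g) and maps f g (= phi_g),
  constrained only for g in the carrier and only on the relevant domains.\<close>
definition partial_action ::
  "('g, 'm) monoid_scheme \<Rightarrow> 'x set \<Rightarrow> ('g \<Rightarrow> 'x set) \<Rightarrow> ('g \<Rightarrow> 'x \<Rightarrow> 'x) \<Rightarrow> bool" where
  "partial_action G S D f \<longleftrightarrow>
     (\<forall>g\<in>carrier G. D g \<subseteq> S \<and> bij_betw (f g) (D (m_inv G g)) (D g)) \<and>
     D (one G) = S \<and> (\<forall>x\<in>S. f (one G) x = x) \<and>
     (\<forall>g\<in>carrier G. \<forall>h\<in>carrier G.
        f g ` (D (m_inv G g) \<inter> D h) = D g \<inter> D (monoid.mult G g h)) \<and>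
     (\<forall>g\<in>carrier G. \<forall>h\<in>carrier G.
        \<forall>x\<in>D (m_inv G h) \<inter> D (monoid.mult G (m_inv G h) (m_inv G g)).
          f g (f h x) = f (monoid.mult G g h) x)"

end

theory Submission imports Defs begin

locale pq = normal H G for H and G (structure) +
  fixes S :: "'x set" and D :: "'a \<Rightarrow> 'x set" and f :: "'a \<Rightarrow> 'x \<Rightarrow> 'x"
  assumes pa: "partial_action G S D f"
    and cond: "\<forall>h\<in>H. D h = D (inv h) \<and> (\<forall>x\<in>D (inv h). f h x = x)"
begin

lemma Dsub: "g \<in> carrier G \<Longrightarrow> D g \<subseteq> S"
  using pa unfolding partial_action_def by blast
lemma bij: "g \<in> carrier G \<Longrightarrow> bij_betw (f g) (D (inv g)) (D g)"
  using pa unfolding partial_action_def by blast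
lemma D1: "D \<one> = S"
  using pa unfolding partial_action_def by blast
lemma f1: "x \<in> S \<Longrightarrow> f \<one> x = x"
  using pa unfolding partial_action_def by blast
lemma ii: "g \<in> carrier G \<Longrightarrow> h \<in> carrier G \<Longrightarrow> f g ` (D (inv g) \<inter> D h) = D g \<inter> D (g \<otimes> h)"
  using pa unfolding partial_action_def by blast
lemma iii: "g \<in> carrier G \<Longrightarrow> h \<in> carrier G \<Longrightarrow> x \<in> D (inv h) \<Longrightarrow> x \<in> D (inv h \<otimes> inv g)
   \<Longrightarrow> f g (f h x) = f (g \<otimes> h) x"
  using pa unfolding partial_action_def by blast

lemma fmaps: "k \<in> carrier G \<Longrightarrow> x \<in> D (inv k) \<Longrightarrow> f k x \<in> D k"
  using bij bij_betwE by blast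

lemma inv_cancel: assumes k: "k \<in> carrier G" and x: "x \<in> D (inv k)"
  shows "f (inv k) (f k x) = x"
proof -
  have "x \<in> D (inv k \<otimes> inv (inv k))" using x k D1 Dsub[of "inv k"] by auto
  then have "f (inv k) (f k x) = f (inv k \<otimes> k) x" using iii[of "inv k" k x] k x by auto
  also have "\<dots> = x" using k x f1 Dsub[of "inv k"] by auto
  finally show ?thesis .
qed

lemma WD: assumes k: "k \<in> carrier G" and k': "k' \<in> carrier G" and h: "k' \<otimes> inv k \<in> H"
  and x: "x \<in> D (inv k)" and x': "x \<in> D (inv k')"
  shows "f k' x = f k x"
proof -
  define h where "h = k' \<otimes> inv k"
  have hc: "h \<in> carrier G" using h h_def subset by auto
  have kk: "k' = h \<otimes> k" using k k' h_def by (simp add: m_assoc)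
  have ik: "inv k' = inv k \<otimes> inv h" using kk hc k by (simp add: inv_mult_group)
  have 1: "f h (f k x) = f k' x" using iii[of h k x] hc k x x' ik kk by auto
  have ih: "inv h = k \<otimes> inv k'" using ik hc k k' by (simp add: m_assoc [symmetric])
  have "f k x \<in> D k \<inter> D (k \<otimes> inv k')" using ii[of k "inv k'"] k k' x x' by blast
  then have "f k x \<in> D (inv h)" using ih by simp
  moreover have "h \<in> H" using h h_def by simp
  ultimately have "f h (f k x) = f k x" using cond by blast
  with 1 show ?thesis by simp
qed

definition E :: "'a set \<Rightarrow> 'x set" where "E C = (\<Union>k\<in>C. D k)"
definition psi :: "'a set \<Rightarrow> 'x \<Rightarrow> 'x" where
  "psi C x = f (SOME k. k \<in> C \<and> x \<in> D (inv k)) x"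

lemma rc_carrier: "a \<in> carrier G \<Longrightarrow> k \<in> H #> a \<Longrightarrow> k \<in> carrier G"
  using elemrcos_carrier is_group by blast

lemma psi_eq: assumes a: "a \<in> carrier G" and k: "k \<in> H #> a" and x: "x \<in> D (inv k)"
  shows "psi (H #> a) x = f k x"
proof -
  have ex: "\<exists>k. k \<in> H #> a \<and> x \<in> D (inv k)" using k x by blast
  define k0 where "k0 = (SOME k. k \<in> H #> a \<and> x \<in> D (inv k))"
  have k0: "k0 \<in> H #> a" "x \<in> D (inv k0)" using someI_ex[OF ex] k0_def by auto
  have kc: "k \<in> carrier G" and k0c: "k0 \<in> carrier G" using rc_carrier a k k0 by auto
  have "H #> a = H #> k" using repr_independence[OF k a] is_subgroup by simp
  then have "k0 \<in> H #> k" using k0 by simp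
  then have "k0 \<otimes> inv k \<in> H" using rcos_module_imp[OF is_group kc] by blast
  then have "f k0 x = f k x" using WD kc k0c x k0 by blast
  then show ?thesis unfolding psi_def k0_def[symmetric] .
qed

lemma inv_rc: assumes a: "a \<in> carrier G" and k: "k' \<in> H #> inv a"
  obtains k where "k \<in> H #> a" "k' = inv k"
proof -
  have "k' \<in> set_inv (H #> a)" using rcos_inv[OF a] k by simp
  then obtain k where "k \<in> H #> a" "k' = inv k" unfolding SET_INV_def by blast
  then show ?thesis using that by blast
qed

lemma inv_rc2: assumes a: "a \<in> carrier G" and k: "k \<in> H #> a"
  shows "inv k \<in> H #> inv a"
proof -
  have "inv k \<in> set_inv (H #> a)" using k unfolding SET_INV_def by blast
  then show ?thesis using rcos_inv[OF a] by simp
qed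

lemma E_inv: assumes a: "a \<in> carrier G"
  shows "x \<in> E (H #> inv a) \<longleftrightarrow> (\<exists>k\<in>H #> a. x \<in> D (inv k))"
proof
  assume "x \<in> E (H #> inv a)"
  then obtain k' where k': "k' \<in> H #> inv a" "x \<in> D k'" unfolding E_def by blast
  then obtain k where "k \<in> H #> a" "k' = inv k" using inv_rc[OF a] by metis
  then show "\<exists>k\<in>H #> a. x \<in> D (inv k)" using k' by blast
next
  assume "\<exists>k\<in>H #> a. x \<in> D (inv k)"
  then obtain k where "k \<in> H #> a" "x \<in> D (inv k)" by blast
  then show "x \<in> E (H #> inv a)" using inv_rc2[OF a] unfolding E_def by blast
qed


lemma Q_inv: "a \<in> carrier G \<Longrightarrow> inv\<^bsub>G Mod H\<^esub> (H #> a) = H #> inv a"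
proof -
  assume a: "a \<in> carrier G"
  have "H #> a \<in> carrier (G Mod H)" unfolding carrier_FactGroup using a by (rule imageI)
  then show ?thesis using inv_FactGroup rcos_inv[OF a] by simp
qed

lemma Q_carr: "C \<in> carrier (G Mod H) \<Longrightarrow> \<exists>a\<in>carrier G. C = H #> a"
  unfolding carrier_FactGroup by blast

lemma part1: assumes a: "a \<in> carrier G"
  shows "E (H #> a) \<subseteq> S \<and> bij_betw (psi (H #> a)) (E (H #> inv a)) (E (H #> a))"
proof
  show "E (H #> a) \<subseteq> S" unfolding E_def
  proof (rule UN_least)
    fix k assume "k \<in> H #> a" then show "D k \<subseteq> S" using Dsub rc_carrier[OF a] by blast
  qed
  have ia: "inv a \<in> carrier G" using a by simp
  have iia: "H #> inv (inv a) = H #> a" using a by simp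
  show "bij_betw (psi (H #> a)) (E (H #> inv a)) (E (H #> a))"
  proof (rule bij_betw_byWitness[where f'="psi (H #> inv a)"])
    show "\<forall>x\<in>E (H #> inv a). psi (H #> inv a) (psi (H #> a) x) = x"
    proof
      fix x assume "x \<in> E (H #> inv a)"
      then obtain k where k: "k \<in> H #> a" "x \<in> D (inv k)" using E_inv[OF a] by blast
      have kc: "k \<in> carrier G" using rc_carrier a k by blast
      have "psi (H #> a) x = f k x" using psi_eq a k by blast
      moreover have "f k x \<in> D (inv (inv k))" using fmaps kc k by simp
      ultimately have "psi (H #> inv a) (psi (H #> a) x) = f (inv k) (f k x)"
        using psi_eq[OF ia inv_rc2[OF a k(1)]] by simp
      then show "psi (H #> inv a) (psi (H #> a) x) = x" using inv_cancel kc k by simp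
    qed
    show "\<forall>y\<in>E (H #> a). psi (H #> a) (psi (H #> inv a) y) = y"
    proof
      fix y assume "y \<in> E (H #> a)"
      then have "y \<in> E (H #> inv (inv a))" using iia by simp
      then obtain k where k: "k \<in> H #> inv a" "y \<in> D (inv k)" using E_inv[OF ia] by blast
      have kc: "k \<in> carrier G" using rc_carrier ia k by blast
      have "psi (H #> inv a) y = f k y" using psi_eq ia k by blast
      moreover have "f k y \<in> D (inv (inv k))" using fmaps kc k by simp
      moreover have "inv k \<in> H #> a" using inv_rc2[OF ia k(1)] iia by simp
      ultimately have "psi (H #> a) (psi (H #> inv a) y) = f (inv k) (f k y)"
        using psi_eq[OF a] by simp
      then show "psi (H #> a) (psi (H #> inv a) y) = y" using inv_cancel kc k by simp
    qed
    show "psi (H #> a) ` E (H #> inv a) \<subseteq> E (H #> a)"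
    proof
      fix y assume "y \<in> psi (H #> a) ` E (H #> inv a)"
      then obtain x where x: "x \<in> E (H #> inv a)" "y = psi (H #> a) x" by blast
      then obtain k where k: "k \<in> H #> a" "x \<in> D (inv k)" using E_inv[OF a] by blast
      have kc: "k \<in> carrier G" using rc_carrier a k by blast
      have "y = f k x" using psi_eq a k x by blast
      then show "y \<in> E (H #> a)" using fmaps kc k unfolding E_def by blast
    qed
    show "psi (H #> inv a) ` E (H #> a) \<subseteq> E (H #> inv a)"
    proof
      fix y assume "y \<in> psi (H #> inv a) ` E (H #> a)"
      then obtain x where x: "x \<in> E (H #> a)" "y = psi (H #> inv a) x" by blast
      then have "x \<in> E (H #> inv (inv a))" using iia by simp
      then obtain k where k: "k \<in> H #> inv a" "x \<in> D (inv k)" using E_inv[OF ia] by blast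
      have kc: "k \<in> carrier G" using rc_carrier ia k by blast
      have "y = f k x" using psi_eq ia k x by blast
      then show "y \<in> E (H #> inv a)" using fmaps kc k unfolding E_def by blast
    qed
  qed
qed


lemma mult_mem: assumes a: "a \<in> carrier G" and b: "b \<in> carrier G"
  and k: "k \<in> H #> a" and m: "m \<in> H #> b"
  shows "k \<otimes> m \<in> H #> (a \<otimes> b)"
proof -
  have "k \<otimes> m \<in> (H #> a) <#> (H #> b)" unfolding set_mult_def using k m by blast
  then show ?thesis using rcos_sum[OF a b] by simp
qed

lemma part2: assumes a: "a \<in> carrier G" and b: "b \<in> carrier G"
  shows "psi (H #> a) ` (E (H #> inv a) \<inter> E (H #> b)) = E (H #> a) \<inter> E (H #> (a \<otimes> b))"
proof
  show "psi (H #> a) ` (E (H #> inv a) \<inter> E (H #> b)) \<subseteq> E (H #> a) \<inter> E (H #> (a \<otimes> b))"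
  proof
    fix y assume "y \<in> psi (H #> a) ` (E (H #> inv a) \<inter> E (H #> b))"
    then obtain x where x: "x \<in> E (H #> inv a)" "x \<in> E (H #> b)" "y = psi (H #> a) x" by blast
    then obtain k where k: "k \<in> H #> a" "x \<in> D (inv k)" using E_inv[OF a] by blast
    obtain m where m: "m \<in> H #> b" "x \<in> D m" using x(2) unfolding E_def by blast
    have kc: "k \<in> carrier G" using rc_carrier a k by blast
    have mc: "m \<in> carrier G" using rc_carrier b m by blast
    have "y = f k x" using psi_eq a k x by blast
    then have "y \<in> D k \<inter> D (k \<otimes> m)" using ii[OF kc mc] k m by blast
    moreover have "k \<otimes> m \<in> H #> (a \<otimes> b)" using mult_mem a b k m by blast
    ultimately show "y \<in> E (H #> a) \<inter> E (H #> (a \<otimes> b))" using k unfolding E_def by blast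
  qed
  show "E (H #> a) \<inter> E (H #> (a \<otimes> b)) \<subseteq> psi (H #> a) ` (E (H #> inv a) \<inter> E (H #> b))"
  proof
    fix y assume "y \<in> E (H #> a) \<inter> E (H #> (a \<otimes> b))"
    then obtain k m where k: "k \<in> H #> a" "y \<in> D k" and m: "m \<in> H #> (a \<otimes> b)" "y \<in> D m"
      unfolding E_def by blast
    have kc: "k \<in> carrier G" using rc_carrier a k by blast
    have ab: "a \<otimes> b \<in> carrier G" using a b by simp
    have mc: "m \<in> carrier G" using rc_carrier ab m by blast
    define n where "n = inv k \<otimes> m"
    have "n \<in> H #> (inv a \<otimes> (a \<otimes> b))" unfolding n_def
      using mult_mem[of "inv a" "a \<otimes> b"] inv_rc2[OF a k(1)] a ab m by blast
    then have n: "n \<in> H #> b" using a b by (simp add: m_assoc [symmetric])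
    have nc: "n \<in> carrier G" using rc_carrier b n by blast
    have "k \<otimes> n = m" unfolding n_def using kc mc by (simp add: m_assoc [symmetric])
    then have "y \<in> f k ` (D (inv k) \<inter> D n)" using ii[OF kc nc] k m by blast
    then obtain x where x: "x \<in> D (inv k)" "x \<in> D n" "y = f k x" by blast
    have "x \<in> E (H #> inv a)" using E_inv[OF a] k x by blast
    moreover have "x \<in> E (H #> b)" using n x unfolding E_def by blast
    moreover have "psi (H #> a) x = y" using psi_eq a k x by simp
    ultimately show "y \<in> psi (H #> a) ` (E (H #> inv a) \<inter> E (H #> b))" by blast
  qed
qed

lemma part3: assumes a: "a \<in> carrier G" and b: "b \<in> carrier G"
  and x1: "x \<in> E (H #> inv b)" and x2: "x \<in> E (H #> (inv b \<otimes> inv a))"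
  shows "psi (H #> a) (psi (H #> b) x) = psi (H #> (a \<otimes> b)) x"
proof -
  have ab: "a \<otimes> b \<in> carrier G" using a b by simp
  obtain k' where k': "k' \<in> H #> b" "x \<in> D (inv k')" using E_inv[OF b] x1 by blast
  have "inv b \<otimes> inv a = inv (a \<otimes> b)" using a b by (simp add: inv_mult_group)
  then obtain m where m: "m \<in> H #> (a \<otimes> b)" "x \<in> D (inv m)" using E_inv[OF ab] x2 by auto
  have k'c: "k' \<in> carrier G" using rc_carrier b k' by blast
  have mc: "m \<in> carrier G" using rc_carrier ab m by blast
  define k where "k = m \<otimes> inv k'"
  have "k \<in> H #> (a \<otimes> b \<otimes> inv b)" unfolding k_def
    using mult_mem[of "a \<otimes> b" "inv b"] inv_rc2[OF b k'(1)] ab b m by blast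
  then have k: "k \<in> H #> a" using a b by (simp add: m_assoc)
  have kc: "k \<in> carrier G" using rc_carrier a k by blast
  have km: "k \<otimes> k' = m" unfolding k_def using k'c mc by (simp add: m_assoc)
  have imk: "inv m = inv k' \<otimes> inv k" using km kc k'c by (metis inv_mult_group)
  have ik: "inv k = k' \<otimes> inv m" using imk kc k'c by (simp add: m_assoc [symmetric])
  have 1: "f k (f k' x) = f m x" using iii[OF kc k'c] k' m imk km by simp
  have "f k' x \<in> D k' \<inter> D (k' \<otimes> inv m)" using ii[OF k'c, of "inv m"] mc k' m by blast
  then have fx: "f k' x \<in> D (inv k)" using ik by simp
  have "psi (H #> b) x = f k' x" using psi_eq b k' by blast
  moreover have "psi (H #> a) (f k' x) = f k (f k' x)" using psi_eq a k fx by blast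
  moreover have "psi (H #> (a \<otimes> b)) x = f m x" using psi_eq ab m by blast
  ultimately show ?thesis using 1 by simp
qed


lemma H1: "H #> \<one> = H" using coset_mult_one subset by blast

lemma pa_quot: "partial_action (G Mod H) S E psi"
  unfolding partial_action_def
proof (intro conjI ballI)
  fix C assume "C \<in> carrier (G Mod H)"
  then obtain a where a: "a \<in> carrier G" "C = H #> a" using Q_carr by blast
  show "E C \<subseteq> S" using part1[OF a(1)] a by simp
  show "bij_betw (psi C) (E (inv\<^bsub>G Mod H\<^esub> C)) (E C)" using part1[OF a(1)] a Q_inv by simp
next
  show "E \<one>\<^bsub>G Mod H\<^esub> = S"
  proof -
    have "E (H #> \<one>) \<subseteq> S" using part1[of \<one>] by blast
    then have "E H \<subseteq> S" using H1 by metis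
    moreover have "S \<subseteq> E H" unfolding E_def using D1 subgroup.one_closed[OF is_subgroup] by blast
    ultimately show ?thesis unfolding one_FactGroup by (rule equalityI)
  qed
next
  fix x assume x: "x \<in> S"
  have oc: "\<one> \<in> carrier G" by simp
  have o: "\<one> \<in> H #> \<one>" by (rule rcos_self[OF oc is_subgroup])
  have "x \<in> D (inv \<one>)" using x D1 by (metis inv_one)
  then have "psi (H #> \<one>) x = f \<one> x" using psi_eq[OF oc o] by blast
  then have "psi H x = x" using H1 f1 x by metis
  then show "psi \<one>\<^bsub>G Mod H\<^esub> x = x" unfolding one_FactGroup .
next
  fix C C' assume "C \<in> carrier (G Mod H)" "C' \<in> carrier (G Mod H)"
  then obtain a b where a: "a \<in> carrier G" "C = H #> a" and b: "b \<in> carrier G" "C' = H #> b"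
    using Q_carr by metis
  show "psi C ` (E (inv\<^bsub>G Mod H\<^esub> C) \<inter> E C') = E C \<inter> E (C \<otimes>\<^bsub>G Mod H\<^esub> C')"
    using part2[OF a(1) b(1)] a b Q_inv rcos_sum by simp
next
  fix C C' x assume "C \<in> carrier (G Mod H)" "C' \<in> carrier (G Mod H)"
  then obtain a b where a: "a \<in> carrier G" "C = H #> a" and b: "b \<in> carrier G" "C' = H #> b"
    using Q_carr by metis
  assume x: "x \<in> E (inv\<^bsub>G Mod H\<^esub> C') \<inter> E (inv\<^bsub>G Mod H\<^esub> C' \<otimes>\<^bsub>G Mod H\<^esub> inv\<^bsub>G Mod H\<^esub> C)"
  have "x \<in> E (H #> inv b)" "x \<in> E (H #> (inv b \<otimes> inv a))"
    using x a b Q_inv rcos_sum by auto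
  then show "psi C (psi C' x) = psi (C \<otimes>\<^bsub>G Mod H\<^esub> C') x"
    using part3[OF a(1) b(1)] a b rcos_sum by simp
qed

end

theorem mainTheorem3:
  fixes G :: "('g, 'm) monoid_scheme" and S :: "'x set"
    and D :: "'g \<Rightarrow> 'x set" and f :: "'g \<Rightarrow> 'x \<Rightarrow> 'x" and H :: "'g set"
  assumes "group G" and "partial_action G S D f" and "normal H G"
  shows "(\<exists>E \<psi>. partial_action (G Mod H) S E \<psi> \<and>
            (\<forall>C\<in>carrier (G Mod H). E C = (\<Union>k\<in>C. D k) \<and>
                (\<forall>k\<in>C. \<forall>x\<in>D (inv\<^bsub>G\<^esub> k). \<psi> C x = f k x)))
         \<longleftrightarrow> (\<forall>h\<in>H. D h = D (inv\<^bsub>G\<^esub> h) \<and> (\<forall>x\<in>D (inv\<^bsub>G\<^esub> h). f h x = x))"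
proof
  interpret N: normal H G by fact
  assume "\<exists>E \<psi>. partial_action (G Mod H) S E \<psi> \<and>
            (\<forall>C\<in>carrier (G Mod H). E C = (\<Union>k\<in>C. D k) \<and>
                (\<forall>k\<in>C. \<forall>x\<in>D (inv\<^bsub>G\<^esub> k). \<psi> C x = f k x))"
  then obtain E \<psi> where pq: "partial_action (G Mod H) S E \<psi>" and
    r: "\<forall>C\<in>carrier (G Mod H). E C = (\<Union>k\<in>C. D k) \<and>
                (\<forall>k\<in>C. \<forall>x\<in>D (inv\<^bsub>G\<^esub> k). \<psi> C x = f k x)" by blast
  have Hc: "H \<in> carrier (G Mod H)"
    using N.subgroup_in_rcosets unfolding FactGroup_def by simp
  have psiH: "\<forall>x\<in>S. \<psi> H x = x" using pq unfolding partial_action_def by simp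
  show "\<forall>h\<in>H. D h = D (inv\<^bsub>G\<^esub> h) \<and> (\<forall>x\<in>D (inv\<^bsub>G\<^esub> h). f h x = x)"
  proof
    fix h assume h: "h \<in> H"
    have hc: "h \<in> carrier G" using h N.subset by blast
    have DS: "D (inv\<^bsub>G\<^esub> h) \<subseteq> S" using assms(2) hc unfolding partial_action_def by simp
    have id: "\<forall>x\<in>D (inv\<^bsub>G\<^esub> h). f h x = x"
    proof
      fix x assume x: "x \<in> D (inv\<^bsub>G\<^esub> h)"
      have "\<psi> H x = f h x" using r Hc h x by blast
      then show "f h x = x" using psiH DS x by auto
    qed
    have "bij_betw (f h) (D (inv\<^bsub>G\<^esub> h)) (D h)" using assms(2) hc unfolding partial_action_def by blast
    then have "D h = f h ` D (inv\<^bsub>G\<^esub> h)" by (simp add: bij_betw_def)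
    also have "\<dots> = D (inv\<^bsub>G\<^esub> h)" using id by simp
    finally show "D h = D (inv\<^bsub>G\<^esub> h) \<and> (\<forall>x\<in>D (inv\<^bsub>G\<^esub> h). f h x = x)" using id by simp
  qed
next
  assume c: "\<forall>h\<in>H. D h = D (inv\<^bsub>G\<^esub> h) \<and> (\<forall>x\<in>D (inv\<^bsub>G\<^esub> h). f h x = x)"
  interpret P: pq H G S D f using assms(3) assms(2) c by (simp add: pq_def pq_axioms_def)
  show "\<exists>E \<psi>. partial_action (G Mod H) S E \<psi> \<and>
            (\<forall>C\<in>carrier (G Mod H). E C = (\<Union>k\<in>C. D k) \<and>
                (\<forall>k\<in>C. \<forall>x\<in>D (inv\<^bsub>G\<^esub> k). \<psi> C x = f k x))"
  proof (intro exI conjI ballI)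
    show "partial_action (G Mod H) S P.E P.psi" by (rule P.pa_quot)
    fix C assume "C \<in> carrier (G Mod H)"
    then obtain a where a: "a \<in> carrier G" "C = H #>\<^bsub>G\<^esub> a" using P.Q_carr by blast
    show "P.E C = (\<Union>k\<in>C. D k)" by (simp add: P.E_def)
    fix k x assume "k \<in> C" "x \<in> D (inv\<^bsub>G\<^esub> k)"
    then show "P.psi C x = f k x" using P.psi_eq a by blast
  qed
qed
end
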